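(* Let $d \geq 3$ and $1 \leq r < \frac d2$ be integers and $|q|<1$. Let $f_{d,r}(x;q) := \sum_{\lambda} x^{\ell(\lambda)} q^{|\lambda|}$, where the sum runs over all partitions $\lambda$ (including the empty one) such that every part is congruent to $0, \pm r \pmod d$, consecutive parts satisfy $\lambda_i - \lambda_{i+1} \geq d$, and $\lambda_i - \lambda_{i+1} > d$ whenever $d \mid \lambda_i$; $\ell(\lambda)$ is the number of parts and $|\lambda|$ their sum. Then \[ f_{d,r}(x;q) = \left(x;q^d\right)_\infty \sum_{n \geq 0} x^n \frac{\left(-q^r, -q^{d-r}; q^d\right)_n}{\left(q^d;q^d\right)_n}. \]
   Context: For $n \in \mathbb{N}_0 \cup \{\infty\}$, $(a;q)_n := \prod_{j=0}^{n-1}(1-aq^j)$ and $(a_1,\dots,a_s;q)_n := (a_1;q)_n\cdots(a_s;q)_n$. *)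

theory Defs
  imports "HOL-Analysis.Analysis"
begin

definition qpoch :: "complex \<Rightarrow> complex \<Rightarrow> nat \<Rightarrow> complex" where
  "qpoch a q n = (\<Prod>j<n. 1 - a * q ^ j)"

definition qpoch_inf :: "complex \<Rightarrow> complex \<Rightarrow> complex" where
  "qpoch_inf a q = (\<Prod>j. 1 - a * q ^ j)"

text \<open>Partitions are lists of parts in weakly decreasing order (here in fact strictly
  decreasing by the gap condition).\<close>
definition drr_partitions :: "nat \<Rightarrow> nat \<Rightarrow> nat list set" where
  "drr_partitions d r = {l.
     (\<forall>p\<in>set l. 0 < p \<and> (p mod d = 0 \<or> p mod d = r mod d \<or> p mod d = (d - r) mod d)) \<and>
     (\<forall>i. Suc i < length l \<longrightarrow>
        l ! (Suc i) + d \<le> l ! i \<and> (d dvd l ! i \<longrightarrow> l ! (Suc i) + d < l ! i))}"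

end

theory Submission
  imports Defs
begin


definition good :: "nat \<Rightarrow> nat \<Rightarrow> nat \<Rightarrow> bool" where
  "good d r p \<longleftrightarrow> 0 < p \<and> (p mod d = 0 \<or> p mod d = r mod d \<or> p mod d = (d - r) mod d)"

definition Rel :: "nat \<Rightarrow> nat \<Rightarrow> nat \<Rightarrow> bool" where
  "Rel d a b \<longleftrightarrow> a + d \<le> b \<and> (d dvd b \<longrightarrow> a + d < b)"

definition SS :: "nat \<Rightarrow> nat \<Rightarrow> nat list set" where
  "SS d r = {l. (\<forall>p\<in>set l. good d r p) \<and> sorted_wrt (Rel d) l}"

lemma transp_Rel: "0 < d \<Longrightarrow> transp (\<lambda>a b. Rel d b a)"
  unfolding transp_def Rel_def by auto

lemma drr_eq: assumes "0 < d" shows "drr_partitions d r = rev ` SS d r"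
proof -
  have *: "l \<in> drr_partitions d r \<longleftrightarrow> rev l \<in> SS d r" for l
  proof -
    have "sorted_wrt (Rel d) (rev l) \<longleftrightarrow> sorted_wrt (\<lambda>a b. Rel d b a) l"
      by (simp add: sorted_wrt_rev)
    also have "\<dots> \<longleftrightarrow> (\<forall>i. Suc i < length l \<longrightarrow> Rel d (l!Suc i) (l!i))"
      by (rule sorted_wrt_iff_nth_Suc_transp[OF transp_Rel[OF assms]])
    finally show ?thesis unfolding drr_partitions_def SS_def by (simp add: good_def Rel_def)
  qed
  have **: "l \<in> rev ` A \<longleftrightarrow> rev l \<in> A" for l :: "nat list" and A
    by (metis image_iff rev_rev_ident)
  show ?thesis by (rule set_eqI) (simp only: * **)
qed

lemma good_shift: "0 < p \<Longrightarrow> good d r (p + d*k) = good d r p"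
  unfolding good_def by simp

lemma Rel_shift: "Rel d (a + d*k) (b + d*k) = Rel d a b"
  unfolding Rel_def by (auto simp: dvd_add_left_iff)

lemma good_pos: "good d r p \<Longrightarrow> 0 < p" unfolding good_def by simp

lemma good_cases:
  assumes "good d r p" "1 \<le> r" "2*r < d"
  shows "p = r \<or> p = d - r \<or> p = d \<or> d < p"
proof -
  have m: "p mod d = 0 \<or> p mod d = r \<or> p mod d = d - r" using assms unfolding good_def by auto
  show ?thesis
  proof (cases "p \<le> d")
    case True
    show ?thesis
    proof (cases "p = d")
      case False with True have "p < d" by simp
      then show ?thesis using m assms(1) unfolding good_def by auto
    qed simp
  qed simp
qed

lemma good_ge_r: "good d r p \<Longrightarrow> 1 \<le> r \<Longrightarrow> 2*r < d \<Longrightarrow> r \<le> p"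
  using good_cases[of d r p] by auto

lemma good_ne_r: "good d r p \<Longrightarrow> 1 \<le> r \<Longrightarrow> 2*r < d \<Longrightarrow> p \<noteq> r \<Longrightarrow> d - r \<le> p"
  using good_cases[of d r p] by auto

lemma good_dvd: "good d r p \<Longrightarrow> d dvd p \<Longrightarrow> d \<le> p"
  unfolding good_def by (simp add: dvd_imp_le)

lemma SS_Cons: "p # l \<in> SS d r \<longleftrightarrow> good d r p \<and> (\<forall>y\<in>set l. Rel d p y) \<and> l \<in> SS d r"
  unfolding SS_def by auto

lemma SS_shift: "l \<in> SS d r \<Longrightarrow> map (\<lambda>p. p + d*k) l \<in> SS d r"
  unfolding SS_def by (auto simp: sorted_wrt_map Rel_shift good_shift good_pos)

lemma SS_unshift: assumes "l \<in> SS d r" "\<forall>p\<in>set l. d*k < p"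
  shows "map (\<lambda>p. p - d*k) l \<in> SS d r" "map (\<lambda>p. p + d*k) (map (\<lambda>p. p - d*k) l) = l"
proof -
  show eq: "map (\<lambda>p. p + d*k) (map (\<lambda>p. p - d*k) l) = l"
    using assms(2) by (induction l) auto
  have g: "good d r (p - d*k)" if "p \<in> set l" for p
    using good_shift[of "p - d*k" d r k] assms that unfolding SS_def by auto
  have "sorted_wrt (Rel d) l" using assms unfolding SS_def by auto
  moreover have "Rel d (a - d*k) (b - d*k)" if "a \<in> set l" "b \<in> set l" "Rel d a b" for a b
  proof -
    have "a = (a - d*k) + d*k" "b = (b - d*k) + d*k" using assms(2) that by auto
    then show ?thesis using that(3) Rel_shift[of d "a - d*k" k "b - d*k"] by simp
  qed
  ultimately have "sorted_wrt (\<lambda>a b. Rel d (a - d*k) (b - d*k)) l"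
    by (rule sorted_wrt_mono_rel[rotated])
  then show "map (\<lambda>p. p - d*k) l \<in> SS d r"
    unfolding SS_def mem_Collect_eq sorted_wrt_map set_map using g by blast
qed



lemma SS_hd_all: assumes "p # l \<in> SS d r" "y \<in> set l" shows "p + d \<le> y" "d dvd y \<Longrightarrow> p + d < y"
  using assms unfolding SS_Cons Rel_def by auto

lemma img1: assumes "1 \<le> r" "2*r < d"
  shows "{m \<in> SS d r. m \<noteq> [] \<and> d < hd m} = map (\<lambda>p. p + d) ` (SS d r - {[]})"
proof (intro set_eqI iffI)
  fix m assume m: "m \<in> {m \<in> SS d r. m \<noteq> [] \<and> d < hd m}"
  then obtain p l where ml: "m = p # l" by (cases m) auto
  have all: "\<forall>y\<in>set m. d*1 < y" using m SS_hd_all[of p l d r] unfolding ml by fastforce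
  have "map (\<lambda>p. p + d*1) (map (\<lambda>p. p - d*1) m) = m" "map (\<lambda>p. p - d*1) m \<in> SS d r"
    using SS_unshift[OF _ all] m by auto
  then show "m \<in> map (\<lambda>p. p + d) ` (SS d r - {[]})"
    using ml by (intro image_eqI[where x="map (\<lambda>p. p - d*1) m"]) auto
next
  fix m assume "m \<in> map (\<lambda>p. p + d) ` (SS d r - {[]})"
  then obtain l where l: "l \<in> SS d r" "l \<noteq> []" "m = map (\<lambda>p. p + d) l" by auto
  then obtain p l' where "l = p # l'" by (cases l) auto
  moreover have "0 < p" using l(1) unfolding \<open>l = p # l'\<close> SS_Cons using good_pos by blast
  ultimately show "m \<in> {m \<in> SS d r. m \<noteq> [] \<and> d < hd m}"
    using SS_shift[OF l(1), of 1] l by auto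
qed

lemma img2: assumes "1 \<le> r" "2*r < d"
  shows "{m \<in> SS d r. m \<noteq> [] \<and> hd m = r} = (\<lambda>l. r # map (\<lambda>p. p + d) l) ` SS d r"
proof (intro set_eqI iffI)
  fix m assume m: "m \<in> {m \<in> SS d r. m \<noteq> [] \<and> hd m = r}"
  then obtain l where ml: "m = r # l" by (cases m) auto
  have lS: "l \<in> SS d r" using m unfolding ml by (auto simp: SS_Cons)
  have all: "\<forall>y\<in>set l. d*1 < y" using m SS_hd_all[of r l d r] assms unfolding ml by fastforce
  have "map (\<lambda>p. p + d*1) (map (\<lambda>p. p - d*1) l) = l" "map (\<lambda>p. p - d*1) l \<in> SS d r"
    using SS_unshift[OF lS all] by auto
  then show "m \<in> (\<lambda>l. r # map (\<lambda>p. p + d) l) ` SS d r"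
    using ml by (intro image_eqI[where x="map (\<lambda>p. p - d*1) l"]) auto
next
  fix m assume "m \<in> (\<lambda>l. r # map (\<lambda>p. p + d) l) ` SS d r"
  then obtain l where l: "l \<in> SS d r" "m = r # map (\<lambda>p. p + d) l" by auto
  have "good d r r" unfolding good_def using assms by auto
  moreover have "Rel d r (y + d)" if "y \<in> set l" for y
  proof -
    have g: "good d r y" using l(1) that unfolding SS_def by auto
    have "r \<le> y" using good_ge_r[OF g assms] .
    moreover have "d dvd y + d \<Longrightarrow> r < y"
      using good_dvd[OF g] assms by (auto simp: dvd_add_left_iff)
    ultimately show ?thesis unfolding Rel_def by auto
  qed
  ultimately show "m \<in> {m \<in> SS d r. m \<noteq> [] \<and> hd m = r}"
    using SS_shift[OF l(1), of 1] l by (auto simp: SS_Cons)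
qed

lemma img3: assumes "1 \<le> r" "2*r < d"
  shows "{m \<in> SS d r. m \<noteq> [] \<and> hd m = d - r} =
     (\<lambda>l. (d - r) # map (\<lambda>p. p + d) l) ` (SS d r - {m \<in> SS d r. m \<noteq> [] \<and> hd m = r})"
proof (intro set_eqI iffI)
  fix m assume m: "m \<in> {m \<in> SS d r. m \<noteq> [] \<and> hd m = d - r}"
  then obtain l where ml: "m = (d - r) # l" by (cases m) auto
  have lS: "l \<in> SS d r" using m unfolding ml by (auto simp: SS_Cons)
  have ge: "\<forall>y\<in>set l. d - r + d \<le> y" using m SS_hd_all[of "d - r" l d r] assms unfolding ml by fastforce
  then have all: "\<forall>y\<in>set l. d*1 < y" using assms by fastforce
  have e: "map (\<lambda>p. p + d*1) (map (\<lambda>p. p - d*1) l) = l" and l'S: "map (\<lambda>p. p - d*1) l \<in> SS d r"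
    using SS_unshift[OF lS all] by auto
  have "hd (map (\<lambda>p. p - d*1) l) \<noteq> r" if "l \<noteq> []"
    using ge that assms by (cases l) auto
  then show "m \<in> (\<lambda>l. (d - r) # map (\<lambda>p. p + d) l) ` (SS d r - {m \<in> SS d r. m \<noteq> [] \<and> hd m = r})"
    using ml e l'S by (intro image_eqI[where x="map (\<lambda>p. p - d*1) l"]) auto
next
  fix m assume "m \<in> (\<lambda>l. (d - r) # map (\<lambda>p. p + d) l) ` (SS d r - {m \<in> SS d r. m \<noteq> [] \<and> hd m = r})"
  then obtain l where l: "l \<in> SS d r" "l = [] \<or> hd l \<noteq> r" "m = (d - r) # map (\<lambda>p. p + d) l" by auto
  have "good d r (d - r)" unfolding good_def using assms by auto
  moreover have "Rel d (d - r) (y + d)" if yl: "y \<in> set l" for y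
  proof -
    have g: "good d r y" using l(1) yl unfolding SS_def by auto
    have "y \<noteq> r"
    proof
      assume "y = r"
      obtain p l' where pl: "l = p # l'" using yl by (cases l) auto
      have "p \<noteq> r" using l(2) pl by auto
      then have "y \<noteq> p" using \<open>y = r\<close> by auto
      then have "y \<in> set l'" using yl pl by auto
      then have "p + d \<le> y" using SS_hd_all[of p l' d r] l(1) pl by auto
      moreover have "r \<le> p" using good_ge_r[of d r p] l(1) pl assms by (auto simp: SS_Cons)
      ultimately show False using \<open>y = r\<close> assms by auto
    qed
    then have "d - r \<le> y" using good_ne_r[OF g assms] by auto
    moreover have "d dvd y + d \<Longrightarrow> d - r < y"
      using good_dvd[OF g] assms by (auto simp: dvd_add_left_iff)
    ultimately show ?thesis unfolding Rel_def by auto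
  qed
  ultimately show "m \<in> {m \<in> SS d r. m \<noteq> [] \<and> hd m = d - r}"
    using SS_shift[OF l(1), of 1] l by (auto simp: SS_Cons)
qed

lemma img4: assumes "1 \<le> r" "2*r < d"
  shows "{m \<in> SS d r. m \<noteq> [] \<and> hd m = d} = (\<lambda>l. d # map (\<lambda>p. p + d*2) l) ` SS d r"
proof (intro set_eqI iffI)
  fix m assume m: "m \<in> {m \<in> SS d r. m \<noteq> [] \<and> hd m = d}"
  then obtain l where ml: "m = d # l" by (cases m) auto
  have lS: "l \<in> SS d r" using m unfolding ml by (auto simp: SS_Cons)
  have all: "\<forall>y\<in>set l. d*2 < y"
  proof
    fix y assume "y \<in> set l"
    then have "d + d \<le> y" "d dvd y \<Longrightarrow> d + d < y" using m SS_hd_all[of d l d r] unfolding ml by auto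
    then show "d*2 < y" by (cases "y = d + d") auto
  qed
  have "map (\<lambda>p. p + d*2) (map (\<lambda>p. p - d*2) l) = l" "map (\<lambda>p. p - d*2) l \<in> SS d r"
    using SS_unshift[OF lS all] by auto
  then show "m \<in> (\<lambda>l. d # map (\<lambda>p. p + d*2) l) ` SS d r"
    using ml by (intro image_eqI[where x="map (\<lambda>p. p - d*2) l"]) auto
next
  fix m assume "m \<in> (\<lambda>l. d # map (\<lambda>p. p + d*2) l) ` SS d r"
  then obtain l where l: "l \<in> SS d r" "m = d # map (\<lambda>p. p + d*2) l" by auto
  have "good d r d" unfolding good_def using assms by auto
  moreover have "Rel d d (y + d*2)" if "y \<in> set l" for y
  proof -
    have g: "good d r y" using l(1) that unfolding SS_def by auto
    show ?thesis using good_pos[OF g] unfolding Rel_def by auto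
  qed
  ultimately show "m \<in> {m \<in> SS d r. m \<noteq> [] \<and> hd m = d}"
    using SS_shift[OF l(1), of 2] l by (auto simp: SS_Cons)
qed

lemma SS_split: assumes "1 \<le> r" "2*r < d"
  shows "SS d r = {[]} \<union> {m \<in> SS d r. m \<noteq> [] \<and> d < hd m} \<union> {m \<in> SS d r. m \<noteq> [] \<and> hd m = r}
     \<union> {m \<in> SS d r. m \<noteq> [] \<and> hd m = d - r} \<union> {m \<in> SS d r. m \<noteq> [] \<and> hd m = d}"
proof (intro set_eqI iffI)
  fix m assume m: "m \<in> SS d r"
  show "m \<in> {[]} \<union> {m \<in> SS d r. m \<noteq> [] \<and> d < hd m} \<union> {m \<in> SS d r. m \<noteq> [] \<and> hd m = r}
     \<union> {m \<in> SS d r. m \<noteq> [] \<and> hd m = d - r} \<union> {m \<in> SS d r. m \<noteq> [] \<and> hd m = d}"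
  proof (cases m)
    case (Cons p l)
    then have "good d r p" using m by (simp add: SS_Cons)
    then show ?thesis using good_cases[of d r p] assms m Cons by auto
  qed (simp add: SS_def)
qed (auto simp: SS_def)



definition wt :: "complex \<Rightarrow> complex \<Rightarrow> nat list \<Rightarrow> complex" where
  "wt x q l = x ^ length l * q ^ sum_list l"

lemma sum_list_shift: "sum_list (map (\<lambda>p. p + c) l) = sum_list l + c * length l"
  by (induction l) auto

lemma wt_shift: "wt x q (map (\<lambda>p. p + c) l) = wt (x * q^c) q l"
  unfolding wt_def sum_list_shift by (simp add: power_add power_mult power_mult_distrib mult_ac)

lemma wt_Cons: "wt x q (c # l) = x * q^c * wt x q l"
  unfolding wt_def by (simp add: power_add mult_ac)

lemma wt_Nil[simp]: "wt x q [] = 1" unfolding wt_def by simp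

lemma SS_sorted: assumes "0 < d" "l \<in> SS d r" shows "sorted l" "distinct l"
proof -
  have "sorted_wrt (Rel d) l" using assms unfolding SS_def by auto
  then have "sorted_wrt (<) l" by (rule sorted_wrt_mono_rel[rotated]) (use assms in \<open>auto simp: Rel_def\<close>)
  then show "sorted l" "distinct l" by (auto simp: strict_sorted_iff)
qed

lemma SS_summable_real:
  fixes t :: real
  assumes "0 < d" "0 \<le> t" "t < 1"
  shows "(\<lambda>l. t ^ sum_list l) summable_on SS d r"
proof (rule nonneg_bdd_above_summable_on)
  show "\<And>l. l \<in> SS d r \<Longrightarrow> 0 \<le> t ^ sum_list l" using assms by simp
  show "bdd_above (sum (\<lambda>l. t ^ sum_list l) ` {F. F \<subseteq> SS d r \<and> finite F})"
  proof (rule bdd_aboveI2)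
    fix F assume F: "F \<in> {F. F \<subseteq> SS d r \<and> finite F}"
    define U where "U = \<Union>(set ` F)"
    have finU: "finite U" using F unfolding U_def by auto
    have inj: "inj_on set F"
    proof (rule inj_onI)
      fix a b assume ab: "a \<in> F" "b \<in> F" "set a = set b"
      then have "a \<in> SS d r" "b \<in> SS d r" using F by auto
      then show "a = b" using sorted_distinct_set_unique[of a b] SS_sorted[OF assms(1)] ab(3) by blast
    qed
    have "sum (\<lambda>l. t ^ sum_list l) F = sum (\<lambda>l. \<Prod>k\<in>set l. t ^ k) F"
    proof (rule sum.cong)
      fix l assume "l \<in> F"
      then have "distinct l" using F SS_sorted[OF assms(1)] by auto
      then have "sum_list l = sum (\<lambda>x. x) (set l)"
        using sum_list_distinct_conv_sum_set[of l "\<lambda>x. x"] by simp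
      then show "t ^ sum_list l = (\<Prod>k\<in>set l. t ^ k)" by (simp add: power_sum)
    qed simp
    also have "\<dots> = sum (\<lambda>A. \<Prod>k\<in>A. t ^ k) (set ` F)"
      using sum.reindex[OF inj, of "\<lambda>A. \<Prod>k\<in>A. t ^ k"] by simp
    also have "\<dots> \<le> sum (\<lambda>A. \<Prod>k\<in>A. t ^ k) (Pow U)"
      by (rule sum_mono2) (use finU assms in \<open>auto simp: U_def intro!: prod_nonneg\<close>)
    also have "\<dots> = (\<Prod>k\<in>U. t ^ k + 1)"
      using prod_add[OF finU, of "\<lambda>k. t ^ k" "\<lambda>_. 1"] by simp
    also have "\<dots> \<le> exp (\<Sum>k\<in>U. t ^ k)"
      using prod_le_exp_sum[of U "\<lambda>k. t ^ k"] assms by (simp add: add.commute)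
    also have "(\<Sum>k\<in>U. t ^ k) \<le> (\<Sum>k. t ^ k)"
      by (rule sum_le_suminf) (use finU assms in \<open>auto intro: summable_geometric\<close>)
    finally show "sum (\<lambda>l. t ^ sum_list l) F \<le> exp (\<Sum>k. t ^ k)" by simp
  qed
qed

lemma wt_summable:
  assumes "0 < d" "norm q < 1" "norm x \<le> 1" and that: "A \<subseteq> SS d r"
  shows "wt x q summable_on A"
proof -
  have "(\<lambda>l. norm (wt x q l)) summable_on SS d r"
  proof (rule summable_on_comparison_test)
    show "(\<lambda>l. norm q ^ sum_list l) summable_on SS d r"
      by (rule SS_summable_real) (use assms in auto)
    fix l :: "nat list"
    have "norm x ^ length l \<le> 1" using assms by (simp add: power_le_one)
    then show "norm (wt x q l) \<le> norm q ^ sum_list l"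
      unfolding wt_def norm_mult norm_power
      by (simp add: mult_left_le_one_le)
  qed simp
  then have "wt x q summable_on SS d r"
    using summable_on_iff_abs_summable_on_complex by blast
  then show ?thesis using summable_on_subset_banach that by blast
qed



lemma norm_mult_qpow_le: "norm (q::complex) < 1 \<Longrightarrow> norm (y * q^c) \<le> norm y"
  by (simp add: norm_mult norm_power) (rule mult_left_le, simp add: power_le_one, simp)

lemma F_eq:
  fixes q x :: complex
  assumes r1: "1 \<le> r" and r2: "2*r < d" and q1: "norm q < 1" and x1: "norm x < 1"
  defines "F \<equiv> \<lambda>y. infsum (wt y q) (SS d r)"
  shows "F x = (1 + x*q^r + x*q^(d-r)) * F (x*q^d) + (x*q^d - x^2*q^d*q^d) * F (x*q^d*q^d)"
proof -
  have d0: "0 < d" using r1 r2 by auto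
  define S where "S = SS d r"
  define B1 where "B1 = {m \<in> SS d r. m \<noteq> [] \<and> d < hd m}"
  define B2 where "B2 = {m \<in> SS d r. m \<noteq> [] \<and> hd m = r}"
  define B3 where "B3 = {m \<in> SS d r. m \<noteq> [] \<and> hd m = d - r}"
  define B4 where "B4 = {m \<in> SS d r. m \<noteq> [] \<and> hd m = d}"
  have hs: "(wt y q has_sum F y) S" if "norm y \<le> 1" for y
    unfolding F_def S_def by (rule has_sum_infsum, rule wt_summable[OF d0 q1 that subset_refl])
  have y1: "norm (y * q^c) \<le> 1" if "norm y \<le> 1" for y c
    using norm_mult_qpow_le[OF q1, of y c] that by linarith
  have injm: "inj (map (\<lambda>p::nat. p + c))" for c by (rule inj_mapI) (simp add: inj_def)
  have injc: "inj_on (\<lambda>l. c # map (\<lambda>p::nat. p + e) l) A" for c e A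
    by (intro inj_onI) (simp add: inj_map_eq_map[OF injm])
  have "(wt (x*q^d) q has_sum (F (x*q^d) - 1)) (S - {[]})"
    using has_sum_Diff[OF hs[OF y1] has_sum_finite[of "{[]}"]] x1 unfolding S_def SS_def by simp
  then have p1: "(wt x q has_sum (F (x*q^d) - 1)) B1"
    unfolding B1_def img1[OF r1 r2] S_def
    by (subst has_sum_reindex) (auto simp: o_def wt_shift inj_on_subset[OF injm])
  have p2: "(wt y q has_sum (y*q^r*F (y*q^d))) B2" if "norm y \<le> 1" for y
    unfolding B2_def img2[OF r1 r2]
    by (subst has_sum_reindex[OF injc]) 
       (auto simp: o_def wt_shift wt_Cons S_def[symmetric] intro!: has_sum_cmult_right hs y1 that)
  have "(wt (x*q^d) q has_sum (F (x*q^d) - x*q^d*q^r*F (x*q^d*q^d))) (S - B2)"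
    by (rule has_sum_Diff[OF hs p2]) (use x1 y1 in \<open>auto simp: B2_def S_def\<close>)
  then have p3: "(wt x q has_sum (x*q^(d-r)*(F (x*q^d) - x*q^d*q^r*F (x*q^d*q^d)))) B3"
    unfolding B3_def img3[OF r1 r2] unfolding B2_def[symmetric]
    by (subst has_sum_reindex[OF injc]) (auto simp: o_def wt_shift wt_Cons S_def intro!: has_sum_cmult_right)
  have xx: "norm (x * (q^d*q^d)) \<le> 1" using y1[OF y1[of x d], of d] x1 by (simp add: mult.assoc)
  have p4: "(wt x q has_sum (x*q^d*F (x*q^d*q^d))) B4"
    unfolding B4_def img4[OF r1 r2]
    by (subst has_sum_reindex[OF injc]) 
       (auto simp: o_def wt_shift wt_Cons S_def[symmetric] power_mult power2_eq_square mult.assoc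
         intro!: has_sum_cmult_right hs xx)
  have p0: "(wt x q has_sum 1) {[]}" using has_sum_finite[of "{[]}" "wt x q"] by simp
  have split: "S = {[]} \<union> B1 \<union> B2 \<union> B3 \<union> B4"
    unfolding S_def B1_def B2_def B3_def B4_def by (rule SS_split[OF r1 r2])
  have "(wt x q has_sum (1 + (F (x*q^d) - 1) + x*q^r*F (x*q^d)
          + x*q^(d-r)*(F (x*q^d) - x*q^d*q^r*F (x*q^d*q^d)) + x*q^d*F (x*q^d*q^d)))
        ({[]} \<union> B1 \<union> B2 \<union> B3 \<union> B4)"
    by (intro has_sum_Un_disjoint p0 p1 p2 p3 p4)
       (use x1 r1 r2 in \<open>auto simp: B1_def B2_def B3_def B4_def\<close>)
  then have eq: "F x = 1 + (F (x*q^d) - 1) + x*q^r*F (x*q^d)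
          + x*q^(d-r)*(F (x*q^d) - x*q^d*q^r*F (x*q^d*q^d)) + x*q^d*F (x*q^d*q^d)"
    using hs[of x] x1 split has_sum_unique by force
  have qq: "q^(d-r)*q^r = q^d" using r2 by (simp add: power_add[symmetric])
  show ?thesis unfolding eq power2_eq_square
    by (simp add: algebra_simps qq[symmetric])
qed



lemma qpoch_Suc: "qpoch a Q (Suc n) = qpoch a Q n * (1 - a * Q^n)"
  unfolding qpoch_def by simp

lemma qpoch_0[simp]: "qpoch a Q 0 = 1" unfolding qpoch_def by simp

lemma one_minus_pow_nz: assumes "norm (Q::complex) < 1" shows "1 - Q * Q^n \<noteq> 0"
proof -
  have "norm Q ^ n \<le> 1" by (rule power_le_one) (use assms in auto)
  then have "norm Q * norm Q ^ n \<le> norm Q" by (simp add: mult_left_le)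
  then have "norm (Q*Q^n) < 1" using assms by (simp add: norm_mult norm_power)
  then show "1 - Q*Q^n \<noteq> 0" by auto
qed

lemma qpoch_nz: "norm (Q::complex) < 1 \<Longrightarrow> qpoch Q Q n \<noteq> 0"
  unfolding qpoch_def using one_minus_pow_nz by (auto simp: prod_zero_iff)

definition cc :: "complex \<Rightarrow> complex \<Rightarrow> complex \<Rightarrow> nat \<Rightarrow> complex" where
  "cc a b Q n = qpoch a Q n * qpoch b Q n / qpoch Q Q n"

lemma cc_rec: "norm Q < 1 \<Longrightarrow> cc a b Q (Suc n) * (1 - Q * Q^n) = cc a b Q n * (1 - a*Q^n) * (1 - b*Q^n)"
  unfolding cc_def qpoch_Suc using qpoch_nz[of Q n] one_minus_pow_nz[of Q n]
  by (simp add: field_simps)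

lemma cc_summable:
  fixes a b Q x :: complex
  assumes Q1: "norm Q < 1" and x1: "norm x < 1"
  shows "summable (\<lambda>n. cc a b Q n * x^n)"
proof -
  define t where "t n = cc a b Q n * x^n" for n
  define \<rho> where "\<rho> n = norm x * norm (1 - a*Q^n) * norm (1 - b*Q^n) / norm (1 - Q*Q^n)" for n
  have tS: "t (Suc n) = t n * (x * (1 - a*Q^n) * (1 - b*Q^n) / (1 - Q*Q^n))" for n
  proof -
    have "cc a b Q (Suc n) = cc a b Q n * (1 - a*Q^n) * (1 - b*Q^n) / (1 - Q*Q^n)"
      using cc_rec[OF Q1, of a b n] one_minus_pow_nz[OF Q1, of n] by (simp add: field_simps)
    then show ?thesis unfolding t_def by (simp add: field_simps)
  qed
  have nt: "norm (t (Suc n)) = \<rho> n * norm (t n)" for n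
    unfolding tS \<rho>_def by (simp add: norm_mult norm_divide)
  have "\<rho> \<longlonglongrightarrow> norm x * norm (1 - a*0) * norm (1 - b*0) / norm (1 - Q*0)"
    unfolding \<rho>_def by (intro tendsto_intros Q1) simp
  then have "\<rho> \<longlonglongrightarrow> norm x" by simp
  moreover have "norm x < (1 + norm x) / 2" using x1 by simp
  ultimately have "eventually (\<lambda>n. \<rho> n < (1 + norm x) / 2) sequentially"
    by (rule order_tendstoD(2))
  then obtain N where N: "\<And>n. n \<ge> N \<Longrightarrow> \<rho> n < (1 + norm x) / 2"
    unfolding eventually_sequentially by blast
  have "summable t"
  proof (rule summable_ratio_test[of "(1 + norm x) / 2" N])
    show "(1 + norm x) / 2 < 1" using x1 by simp
    fix n assume "n \<ge> N"
    then show "norm (t (Suc n)) \<le> (1 + norm x) / 2 * norm (t n)"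
      unfolding nt using N[of n] by (intro mult_right_mono) auto
  qed
  then show ?thesis unfolding t_def .
qed

lemma cc_sums: "norm Q < 1 \<Longrightarrow> norm x < 1 \<Longrightarrow> (\<lambda>n. cc a b Q n * x^n) sums (\<Sum>n. cc a b Q n * x^n)"
  using cc_summable summable_sums by blast

lemma norm_mult_le1: "norm (Q::complex) < 1 \<Longrightarrow> norm (y * Q) \<le> norm y"
  by (simp add: norm_mult mult_left_le)

lemma G_eq:
  fixes a b Q x :: complex
  assumes ab: "a * b = Q" and Q1: "norm Q < 1" and x1: "norm x < 1"
  defines "G \<equiv> \<lambda>y. \<Sum>n. cc a b Q n * y^n"
  shows "(1 - x) * G x = (1 - (a + b) * x) * G (x*Q) + x * Q * G (x*Q*Q)"
proof -
  have xQ: "norm (x*Q) < 1" using norm_mult_le1[OF Q1, of x] x1 by linarith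
  have xQQ: "norm (x*Q*Q) < 1" using norm_mult_le1[OF Q1, of "x*Q"] xQ by linarith
  note s1 = cc_sums[OF Q1 x1, of a b] and s2 = cc_sums[OF Q1 xQ, of a b] and s3 = cc_sums[OF Q1 xQQ, of a b]
  define u where "u n = cc a b Q n * x^n - cc a b Q n * (x*Q)^n" for n
  define v where "v n = x * (cc a b Q n * x^n - (a+b) * (cc a b Q n * (x*Q)^n) + Q * (cc a b Q n * (x*Q*Q)^n))" for n
  have su: "u sums (G x - G (x*Q))" unfolding u_def G_def by (intro sums_diff s1 s2)
  have sv: "v sums (x * (G x - (a+b) * G (x*Q) + Q * G (x*Q*Q)))"
    unfolding v_def G_def by (intro sums_mult sums_add sums_diff s1 s2 s3)
  have uv: "u (Suc n) = v n" for n
  proof -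
    have "u (Suc n) = x^(Suc n) * (cc a b Q (Suc n) * (1 - Q * Q^n))"
      unfolding u_def by (simp add: power_mult_distrib algebra_simps)
    also have "\<dots> = x^(Suc n) * (cc a b Q n * ((1 - a*Q^n) * (1 - b*Q^n)))"
      using cc_rec[OF Q1, of a b n] by (simp add: mult.assoc)
    also have "(1 - a*Q^n) * (1 - b*Q^n) = 1 - (a+b)*Q^n + (a*b)*Q^n*Q^n"
      by (simp add: algebra_simps)
    also have "x^(Suc n) * (cc a b Q n * (1 - (a+b)*Q^n + (a*b)*Q^n*Q^n)) = v n"
      unfolding v_def ab by (simp add: power_mult_distrib algebra_simps)
    finally show ?thesis .
  qed
  have "(\<lambda>n. u (Suc n)) sums (x * (G x - (a+b) * G (x*Q) + Q * G (x*Q*Q)))"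
    unfolding uv using sv .
  then have "u sums (x * (G x - (a+b) * G (x*Q) + Q * G (x*Q*Q)) + u 0)"
    by (simp add: sums_Suc_iff)
  moreover have "u 0 = 0" unfolding u_def by simp
  ultimately have "G x - G (x*Q) = x * (G x - (a+b) * G (x*Q) + Q * G (x*Q*Q))"
    using su sums_unique2 by force
  then show ?thesis by (simp add: algebra_simps)
qed

lemma P_conv: "norm (Q::complex) < 1 \<Longrightarrow> convergent_prod (\<lambda>j. 1 - y*Q^j)"
proof (rule abs_convergent_prod_imp_convergent_prod, rule summable_imp_abs_convergent_prod)
  assume "norm Q < 1"
  then have "summable (\<lambda>j. norm y * norm Q ^ j)" by (intro summable_mult summable_geometric) simp
  then show "summable (\<lambda>j. norm (1 - y*Q^j - 1))" by (simp add: norm_mult norm_power)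
qed

lemma P_eq: "norm (Q::complex) < 1 \<Longrightarrow> qpoch_inf y Q = (1 - y) * qpoch_inf (y*Q) Q"
proof -
  assume Q1: "norm Q < 1"
  have "(\<lambda>j. 1 - y*Q^j) has_prod ((\<Prod>k<1. 1 - y*Q^k) * (\<Prod>k. 1 - y*Q^(k+1)))"
    by (rule has_prod_ignore_initial_segment'[OF P_conv[OF Q1]])
  then have "qpoch_inf y Q = (\<Prod>k<1. 1 - y*Q^k) * (\<Prod>k. 1 - y*Q^(k+1))"
    unfolding qpoch_inf_def by (rule has_prod_unique[symmetric])
  also have "(\<Prod>k. 1 - y*Q^(k+1)) = qpoch_inf (y*Q) Q"
    unfolding qpoch_inf_def by (rule prodinf_cong) (simp add: mult_ac)
  finally show ?thesis by simp
qed

lemma P_bound: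
  assumes Q1: "norm (Q::complex) < 1"
  shows "norm (qpoch_inf y Q - 1) \<le> exp (norm y / (1 - norm Q)) - 1"
proof -
  have lim: "(\<lambda>n. \<Prod>i\<le>n. 1 - y*Q^i) \<longlonglongrightarrow> qpoch_inf y Q"
    unfolding qpoch_inf_def by (rule convergent_prod_LIMSEQ[OF P_conv[OF Q1]])
  have sg: "summable (\<lambda>i. norm y * norm Q ^ i)" using Q1 by (intro summable_mult summable_geometric) simp
  have "norm ((\<Prod>i\<le>n. 1 - y*Q^i) - 1) \<le> exp (norm y / (1 - norm Q)) - 1" for n
  proof -
    have "norm ((\<Prod>i\<le>n. 1 - y*Q^i) - 1) = norm ((\<Prod>i\<le>n. 1 + (- y*Q^i)) - 1)" by simp
    also have "\<dots> \<le> (\<Prod>i\<le>n. 1 + norm (- y*Q^i)) - 1"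
      by (rule norm_prod_minus1_le_prod_minus1)
    also have "(\<Prod>i\<le>n. 1 + norm (- y*Q^i)) \<le> exp (\<Sum>i\<le>n. norm (- y*Q^i))"
      by (rule prod_le_exp_sum) simp
    also have "(\<Sum>i\<le>n. norm (- y*Q^i)) = (\<Sum>i\<le>n. norm y * norm Q ^ i)"
      by (simp add: norm_mult norm_power)
    also have "\<dots> \<le> (\<Sum>i. norm y * norm Q ^ i)"
      by (rule sum_le_suminf[OF sg]) auto
    also have "(\<Sum>i. norm y * norm Q ^ i) = norm y / (1 - norm Q)"
      using suminf_mult[OF summable_geometric[of "norm Q"]] suminf_geometric[of "norm Q"] Q1
      by simp
    finally show ?thesis by simp
  qed
  then show ?thesis
    by (intro LIMSEQ_le_const2[OF tendsto_norm[OF tendsto_diff[OF lim tendsto_const]]]) auto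
qed



lemma uniq:
  fixes D :: "complex \<Rightarrow> complex" and Q A x :: complex
  assumes Q1: "norm Q < 1" and lim: "(D \<longlongrightarrow> 0) (at 0)" and D0: "D 0 = 0"
    and feq: "\<And>y. norm y < 1 \<Longrightarrow> D y = (1 + A*y) * D (y*Q) + y*Q*(1 - y*Q) * D (y*Q*Q)"
    and x1: "norm x < 1"
  shows "D x = 0"
proof (rule ccontr)
  assume ne: "D x \<noteq> 0"
  define C where "C = norm A + 2"
  define E where "E t = exp (C*t/(1 - norm Q))" for t
  have C0: "0 \<le> C" unfolding C_def by simp
  have nQ: "0 < 1 - norm Q" using Q1 by simp
  have Emono: "E t \<le> E s" if "t \<le> s" for t s
    unfolding E_def using that C0 nQ by (auto intro!: divide_right_mono mult_left_mono)
  have E1: "1 \<le> E t" if "0 \<le> t" for t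
    unfolding E_def using that C0 nQ by simp
  have Estep: "(1 + C*t) * E (t * norm Q) \<le> E t" if "0 \<le> t" for t
  proof -
    have "1 + C*t \<le> exp (C*t)" by (rule exp_ge_add_one_self)
    then have "(1 + C*t) * E (t * norm Q) \<le> exp (C*t) * E (t * norm Q)"
      by (rule mult_right_mono) (simp add: E_def)
    also have "exp (C*t) * E (t * norm Q) = exp (C*t + C*(t*norm Q)/(1 - norm Q))"
      unfolding E_def by (simp add: exp_add)
    also have "C*t + C*(t*norm Q)/(1 - norm Q) = C*t/(1 - norm Q)"
      using nQ by (simp add: field_simps)
    finally show ?thesis unfolding E_def .
  qed
  define \<epsilon> where "\<epsilon> = norm (D x) / (2 * E (norm x))"
  have Ex: "1 \<le> E (norm x)" by (rule E1) simp
  have \<epsilon>0: "0 < \<epsilon>" unfolding \<epsilon>_def using ne Ex by simp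
  obtain \<delta> where \<delta>0: "0 < \<delta>" and \<delta>: "\<And>z. z \<noteq> 0 \<and> dist z 0 < \<delta> \<longrightarrow> dist (D z) 0 < \<epsilon>"
    using metric_LIM_D[OF lim \<epsilon>0] by blast
  have small: "norm (D z) \<le> \<epsilon>" if "norm z < \<delta>" for z
  proof (cases "z = 0")
    case True then show ?thesis using D0 \<epsilon>0 by simp
  next
    case False then show ?thesis using \<delta>[of z] that by simp
  qed
  have claim: "\<forall>y::complex. norm y \<le> norm x \<longrightarrow> norm y * norm Q ^ N < \<delta> \<longrightarrow> norm (D y) \<le> E (norm y) * \<epsilon>" for N
  proof (induction N)
    case 0
    show ?case
    proof (intro allI impI)
      fix y :: complex assume "norm y \<le> norm x" "norm y * norm Q ^ 0 < \<delta>"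
      then have "norm (D y) \<le> \<epsilon>" using small by simp
      also have "\<epsilon> \<le> E (norm y) * \<epsilon>" using E1[of "norm y"] \<epsilon>0 by simp
      finally show "norm (D y) \<le> E (norm y) * \<epsilon>" .
    qed
  next
    case (Suc N)
    show ?case
    proof (intro allI impI)
      fix y :: complex assume yx: "norm y \<le> norm x" and yd: "norm y * norm Q ^ Suc N < \<delta>"
      have y1: "norm y < 1" using yx x1 by simp
      have nq0: "0 \<le> norm Q" by simp
      have nQ1: "norm Q \<le> 1" using Q1 by simp
      have "norm y * norm Q \<le> norm y" by (rule mult_left_le[OF nQ1]) simp
      then have a1: "norm (y*Q) \<le> norm x" using yx by (simp add: norm_mult)
      have a2: "norm (y*Q) * norm Q ^ N < \<delta>" using yd by (simp add: norm_mult mult_ac)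
      have "norm (y*Q) * norm Q \<le> norm (y*Q)" by (rule mult_left_le[OF nQ1]) simp
      then have b1: "norm (y*Q*Q) \<le> norm x" using a1 by (simp add: norm_mult)
      have "norm (y*Q*Q) * norm Q ^ N = (norm y * norm Q ^ Suc N) * norm Q"
        by (simp add: norm_mult mult_ac)
      also have "\<dots> \<le> norm y * norm Q ^ Suc N" using nQ1 by (simp add: mult_left_le)
      finally have b2: "norm (y*Q*Q) * norm Q ^ N < \<delta>" using yd by simp
      have D1: "norm (D (y*Q)) \<le> E (norm y * norm Q) * \<epsilon>"
        using Suc.IH[rule_format, OF a1 a2] by (simp add: norm_mult)
      have "norm (D (y*Q*Q)) \<le> E (norm y * norm Q * norm Q) * \<epsilon>"
        using Suc.IH[rule_format, OF b1 b2] by (simp add: norm_mult)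
      also have "\<dots> \<le> E (norm y * norm Q) * \<epsilon>"
        using \<epsilon>0 nQ1 by (intro mult_right_mono Emono) (auto simp: mult_left_le)
      finally have D2: "norm (D (y*Q*Q)) \<le> E (norm y * norm Q) * \<epsilon>" .
      have n1: "norm (1 + A*y) \<le> 1 + norm A * norm y"
        using norm_triangle_ineq[of 1 "A*y"] by (simp add: norm_mult)
      have "norm (1 - y*Q) \<le> 2"
        using norm_triangle_ineq4[of 1 "y*Q"] a1 x1 by (simp add: norm_mult)
      then have n2: "norm (y*Q*(1 - y*Q)) \<le> 2 * norm y"
      proof -
        assume h: "norm (1 - y*Q) \<le> 2"
        have "norm (y*Q*(1 - y*Q)) = norm y * norm Q * norm (1 - y*Q)" by (simp add: norm_mult)
        also have "\<dots> \<le> norm y * 1 * 2"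
          using h nQ1 by (intro mult_mono) (auto intro: mult_left_le)
        finally show ?thesis by simp
      qed
      have "norm (D y) \<le> norm (1 + A*y) * norm (D (y*Q)) + norm (y*Q*(1 - y*Q)) * norm (D (y*Q*Q))"
        unfolding feq[OF y1] by (metis norm_mult norm_triangle_ineq)
      also have "\<dots> \<le> (1 + norm A * norm y) * (E (norm y * norm Q) * \<epsilon>) + (2 * norm y) * (E (norm y * norm Q) * \<epsilon>)"
        by (intro add_mono mult_mono n1 n2 D1 D2) auto
      also have "\<dots> = (1 + C * norm y) * E (norm y * norm Q) * \<epsilon>"
        unfolding C_def by (simp add: algebra_simps)
      also have "\<dots> \<le> E (norm y) * \<epsilon>"
        using Estep[of "norm y"] \<epsilon>0 by (intro mult_right_mono) auto
      finally show "norm (D y) \<le> E (norm y) * \<epsilon>" .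
    qed
  qed
  have "(\<lambda>N. norm x * norm Q ^ N) \<longlonglongrightarrow> norm x * 0"
    by (intro tendsto_intros) (use Q1 in simp)
  then have "eventually (\<lambda>N. norm x * norm Q ^ N < \<delta>) sequentially"
    using \<delta>0 by (intro order_tendstoD(2)) auto
  then obtain N where "norm x * norm Q ^ N < \<delta>" using eventually_sequentially by auto
  then have "norm (D x) \<le> E (norm x) * \<epsilon>" using claim[of N] by simp
  also have "\<dots> = norm (D x) / 2" unfolding \<epsilon>_def using Ex by simp
  finally show False using ne by simp
qed



lemma F_bound:
  fixes q x :: complex
  assumes d0: "0 < d" and q1: "norm q < 1" and x1: "norm x \<le> 1"
  shows "norm (infsum (wt x q) (SS d r) - 1) \<le> norm x * infsum (\<lambda>l. norm q ^ sum_list l) (SS d r - {[]})"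
proof -
  define S' where "S' = SS d r - {[]}"
  have sub: "S' \<subseteq> SS d r" unfolding S'_def by auto
  have "(wt x q has_sum (infsum (wt x q) (SS d r) - 1)) S'"
    unfolding S'_def
    using has_sum_Diff[OF has_sum_infsum[OF wt_summable[OF d0 q1 x1 subset_refl]] has_sum_finite[of "{[]}"]]
    by (simp add: SS_def)
  then have e: "infsum (wt x q) (SS d r) - 1 = infsum (wt x q) S'" by (simp add: infsumI)
  have abs: "(\<lambda>l. norm (wt x q l)) summable_on S'"
    using wt_summable[OF d0 q1 x1 sub] summable_on_iff_abs_summable_on_complex by blast
  have rs: "(\<lambda>l. norm q ^ sum_list l) summable_on S'"
    using summable_on_subset_banach[OF SS_summable_real[OF d0, of "norm q" r] sub] q1 by simp
  have "norm (infsum (wt x q) S') \<le> infsum (\<lambda>l. norm (wt x q l)) S'"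
    by (rule norm_infsum_bound[OF abs])
  also have "\<dots> \<le> infsum (\<lambda>l. norm x * norm q ^ sum_list l) S'"
  proof (rule infsum_mono[OF abs summable_on_cmult_right[OF rs]])
    fix l assume "l \<in> S'"
    then have "1 \<le> length l" unfolding S'_def by (cases l) auto
    then have "norm x ^ length l \<le> norm x ^ 1"
      by (intro power_decreasing) (use x1 in auto)
    then show "norm (wt x q l) \<le> norm x * norm q ^ sum_list l"
      unfolding wt_def norm_mult norm_power by (intro mult_right_mono) auto
  qed
  also have "\<dots> = norm x * infsum (\<lambda>l. norm q ^ sum_list l) S'"
    by (rule infsum_cmult_right')
  finally show ?thesis unfolding e S'_def .
qed

theorem proposition2p2:
  fixes d r :: nat and x q :: complex
  assumes "d \<ge> 3" and "1 \<le> r" and "2 * r < d"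
    and "norm q < 1" and "norm x < 1"
  shows "((\<lambda>l. x ^ length l * q ^ sum_list l) has_sum
           (qpoch_inf x (q ^ d) *
            (\<Sum>n. x ^ n * qpoch (- (q ^ r)) (q ^ d) n * qpoch (- (q ^ (d - r))) (q ^ d) n
                   / qpoch (q ^ d) (q ^ d) n)))
         (drr_partitions d r)"
proof -
  note r1 = assms(2) and r2 = assms(3) and q1 = assms(4) and x1 = assms(5)
  have d0: "0 < d" using r1 r2 by auto
  define Q where "Q = q^d"
  define a where "a = - (q^r)"
  define b where "b = - (q^(d-r))"
  have ab: "a * b = Q" unfolding a_def b_def Q_def using r2 by (simp add: power_add[symmetric])
  have "norm q ^ d \<le> norm q ^ 1" by (rule power_decreasing) (use d0 q1 in auto)
  then have Q1: "norm Q < 1" unfolding Q_def using q1 by (simp add: norm_power)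
  define F where "F y = infsum (wt y q) (SS d r)" for y
  define G where "G y = (\<Sum>n. cc a b Q n * y^n)" for y
  define P where "P y = qpoch_inf y Q" for y
  define H where "H y = P y * G y" for y
  define D where "D y = F y - H y" for y
  define A where "A = q^r + q^(d-r)"
  have yQ: "norm (y*Q) < 1" if "norm y < 1" for y
    using norm_mult_le1[OF Q1, of y] that by linarith
  have feqF: "F y = (1 + A*y) * F (y*Q) + y*Q*(1 - y*Q) * F (y*Q*Q)" if "norm y < 1" for y
    using F_eq[OF r1 r2 q1 that] unfolding F_def[symmetric] Q_def[symmetric] A_def
    by (simp add: algebra_simps power2_eq_square)
  have feqH: "H y = (1 + A*y) * H (y*Q) + y*Q*(1 - y*Q) * H (y*Q*Q)" if "norm y < 1" for y
  proof -
    have e1: "P y = (1 - y) * P (y*Q)" unfolding P_def by (rule P_eq[OF Q1])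
    have e2: "(1 - y) * G y = (1 - (a + b) * y) * G (y*Q) + y * Q * G (y*Q*Q)"
      unfolding G_def by (rule G_eq[OF ab Q1 that])
    have e3: "P (y*Q) = (1 - y*Q) * P (y*Q*Q)" unfolding P_def by (rule P_eq[OF Q1])
    have "H y = ((1 - y) * G y) * P (y*Q)" unfolding H_def e1 by (simp add: mult_ac)
    also have "\<dots> = (1 - (a+b)*y) * (P (y*Q) * G (y*Q)) + y*Q*G (y*Q*Q) * P (y*Q)"
      unfolding e2 by (simp add: algebra_simps)
    also have "\<dots> = (1 - (a+b)*y) * H (y*Q) + y*Q*(1 - y*Q) * H (y*Q*Q)"
      unfolding H_def e3 by (simp add: algebra_simps)
    finally show ?thesis unfolding A_def a_def b_def by (simp add: algebra_simps)
  qed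
  have feqD: "D y = (1 + A*y) * D (y*Q) + y*Q*(1 - y*Q) * D (y*Q*Q)" if "norm y < 1" for y
    unfolding D_def by (subst feqF[OF that], subst feqH[OF that]) (simp add: algebra_simps)
  define K where "K = infsum (\<lambda>l. norm q ^ sum_list l) (SS d r - {[]})"
  have Fb: "norm (F y - 1) \<le> norm y * K" if "norm y \<le> 1" for y
    unfolding F_def K_def by (rule F_bound[OF d0 q1 that])
  have F0: "F 0 = 1" using Fb[of 0] by simp
  have ev1: "eventually (\<lambda>y::complex. norm y \<le> 1) (at 0)"
    by (auto simp: eventually_at intro!: exI[of _ 1])
  have "((\<lambda>y. F y - 1) \<longlongrightarrow> 0) (at 0)"
  proof (rule Lim_null_comparison)
    show "eventually (\<lambda>y. norm (F y - 1) \<le> norm y * K) (at 0)"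
      using ev1 by eventually_elim (rule Fb)
    have "((\<lambda>y::complex. norm y * K) \<longlongrightarrow> norm (0::complex) * K) (at 0)"
      by (intro tendsto_intros)
    then show "((\<lambda>y::complex. norm y * K) \<longlongrightarrow> 0) (at 0)" by simp
  qed
  then have Flim: "(F \<longlongrightarrow> 1) (at 0)"
    using tendsto_add[OF _ tendsto_const[of 1]] by fastforce
  have "((\<lambda>y. P y - 1) \<longlongrightarrow> 0) (at 0)"
  proof (rule Lim_null_comparison)
    show "eventually (\<lambda>y. norm (P y - 1) \<le> exp (norm y / (1 - norm Q)) - 1) (at 0)"
      unfolding P_def using P_bound[OF Q1] by simp
    have "((\<lambda>y::complex. exp (norm y / (1 - norm Q)) - 1) \<longlongrightarrow> exp (norm (0::complex) / (1 - norm Q)) - 1) (at 0)"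
      by (intro tendsto_intros) (use Q1 in auto)
    then show "((\<lambda>y::complex. exp (norm y / (1 - norm Q)) - 1) \<longlongrightarrow> 0) (at 0)" by simp
  qed
  then have Plim: "(P \<longlongrightarrow> 1) (at 0)"
    using tendsto_add[OF _ tendsto_const[of 1]] by fastforce
  have "summable (\<lambda>n. cc a b Q n * (1/2)^n)" by (rule cc_summable[OF Q1]) simp
  then have "isCont G 0" unfolding G_def by (rule isCont_powser) simp
  moreover have G0: "G 0 = 1" unfolding G_def powser_zero by (simp add: cc_def)
  ultimately have Glim: "(G \<longlongrightarrow> 1) (at 0)" by (simp add: isCont_def)
  have Dlim: "(D \<longlongrightarrow> 0) (at 0)"
    unfolding D_def H_def using tendsto_diff[OF Flim tendsto_mult[OF Plim Glim]] by simp
  have P0: "P 0 = 1" unfolding P_def qpoch_inf_def by simp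
  have D0: "D 0 = 0" unfolding D_def H_def using F0 P0 G0 by simp
  have "D x = 0" by (rule uniq[OF Q1 Dlim D0 feqD x1])
  then have FH: "F x = H x" unfolding D_def by simp
  have hsF: "(wt x q has_sum F x) (SS d r)"
    unfolding F_def by (rule has_sum_infsum, rule wt_summable[OF d0 q1 _ subset_refl]) (use x1 in simp)
  have injr: "inj_on rev (SS d r)" by (simp add: inj_on_def)
  have "(wt x q has_sum F x) (rev ` SS d r)"
    using hsF by (subst has_sum_reindex[OF injr]) (simp add: o_def wt_def[abs_def])
  moreover have "(\<lambda>n. x ^ n * qpoch (- (q ^ r)) (q ^ d) n * qpoch (- (q ^ (d - r))) (q ^ d) n
                   / qpoch (q ^ d) (q ^ d) n) = (\<lambda>n. cc a b Q n * x^n)"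
    unfolding cc_def a_def b_def Q_def by (simp add: fun_eq_iff mult_ac)
  ultimately show ?thesis
    unfolding drr_eq[OF d0] FH H_def P_def G_def Q_def wt_def[abs_def] by simp
qed

end
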